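(* Let $G$ be a hypo-efficient domination graph. Then $|V(G)|\leq\gamma(G)(\Delta(G)+1)-1$. Moreover: (i) Suppose $|V(G)|=\gamma(G)(\Delta(G)+1)-1$. Then (a) for every $\gamma$-set $D$ of $G$ there is exactly one vertex $y_D\in V(G)\setminus D$ such that $D$ is an efficient dominating set of $G-y_D$, and $y_D$ is adjacent to exactly $2$ vertices of $D$; and (b) every vertex belonging to some $\gamma$-set of $G$ has degree $\Delta(G)$. In particular, if every vertex of $G$ belongs to some $\gamma$-set of $G$, then $G$ is regular. (ii) If there exist a $\gamma$-set $D$ of $G$ and a vertex $y\in V(G)\setminus D$ such that $D$ is an efficient dominating set of $G-y$, $y$ is adjacent to exactly $2$ vertices of $D$, and every vertex of $D$ has degree $\Delta(G)$, then $|V(G)|=\gamma(G)(\Delta(G)+1)-1$.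
   Context: All graphs are finite, simple and undirected. For $v\in V(G)$, $N[v]$ is the closed neighborhood of $v$. A set $D\subseteq V(G)$ is dominating if every vertex of $G$ not in $D$ has a neighbor in $D$; $\gamma(G)$ is the minimum size of a dominating set, and a dominating set of size $\gamma(G)$ is a $\gamma$-set. A set $D\subseteq V(H)$ is an efficient dominating set (EDS) of a graph $H$ if $|N_H[v]\cap D|=1$ for every $v\in V(H)$. $G$ is a hypo-efficient domination graph if $G$ has no EDS but $G-v$ has at least one EDS for every $v\in V(G)$. $\Delta(G)$ is the maximum degree. *)

theory Defs
  imports Main
begin

definition simple_graph :: "'a set \<Rightarrow> ('a \<Rightarrow> 'a \<Rightarrow> bool) \<Rightarrow> bool" where
  "simple_graph V E \<longleftrightarrow> finite V \<and> (\<forall>u v. E u v \<longrightarrow> u \<in> V \<and> v \<in> V)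
     \<and> (\<forall>u v. E u v \<longrightarrow> E v u) \<and> (\<forall>v. \<not> E v v)"

definition nbhd :: "'a set \<Rightarrow> ('a \<Rightarrow> 'a \<Rightarrow> bool) \<Rightarrow> 'a \<Rightarrow> 'a set" where
  "nbhd V E v = {u \<in> V. E v u}"

definition closed_nbhd :: "'a set \<Rightarrow> ('a \<Rightarrow> 'a \<Rightarrow> bool) \<Rightarrow> 'a \<Rightarrow> 'a set" where
  "closed_nbhd V E v = insert v (nbhd V E v)"

definition degree :: "'a set \<Rightarrow> ('a \<Rightarrow> 'a \<Rightarrow> bool) \<Rightarrow> 'a \<Rightarrow> nat" where
  "degree V E v = card (nbhd V E v)"

definition max_degree :: "'a set \<Rightarrow> ('a \<Rightarrow> 'a \<Rightarrow> bool) \<Rightarrow> nat" where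
  "max_degree V E = (if V = {} then 0 else Max (degree V E ` V))"

definition regular :: "'a set \<Rightarrow> ('a \<Rightarrow> 'a \<Rightarrow> bool) \<Rightarrow> bool" where
  "regular V E \<longleftrightarrow> (\<forall>u\<in>V. \<forall>v\<in>V. degree V E u = degree V E v)"

definition del_vertex :: "('a \<Rightarrow> 'a \<Rightarrow> bool) \<Rightarrow> 'a \<Rightarrow> ('a \<Rightarrow> 'a \<Rightarrow> bool)" where
  "del_vertex E x = (\<lambda>u v. E u v \<and> u \<noteq> x \<and> v \<noteq> x)"

definition dominating :: "'a set \<Rightarrow> ('a \<Rightarrow> 'a \<Rightarrow> bool) \<Rightarrow> 'a set \<Rightarrow> bool" where
  "dominating V E D \<longleftrightarrow> D \<subseteq> V \<and> (\<forall>v \<in> V - D. \<exists>u \<in> D. E v u)"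

definition domination_number :: "'a set \<Rightarrow> ('a \<Rightarrow> 'a \<Rightarrow> bool) \<Rightarrow> nat" where
  "domination_number V E = (LEAST k. \<exists>D. dominating V E D \<and> card D = k)"

definition gamma_set :: "'a set \<Rightarrow> ('a \<Rightarrow> 'a \<Rightarrow> bool) \<Rightarrow> 'a set \<Rightarrow> bool" where
  "gamma_set V E D \<longleftrightarrow> dominating V E D \<and> card D = domination_number V E"

definition efficient_dominating :: "'a set \<Rightarrow> ('a \<Rightarrow> 'a \<Rightarrow> bool) \<Rightarrow> 'a set \<Rightarrow> bool" where
  "efficient_dominating V E D \<longleftrightarrow> D \<subseteq> V \<and> (\<forall>v \<in> V. card (closed_nbhd V E v \<inter> D) = 1)"

definition hypo_efficient_domination :: "'a set \<Rightarrow> ('a \<Rightarrow> 'a \<Rightarrow> bool) \<Rightarrow> bool" where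
  "hypo_efficient_domination V E \<longleftrightarrow>
     (\<nexists>D. efficient_dominating V E D) \<and>
     (\<forall>v \<in> V. \<exists>D. efficient_dominating (V - {v}) (del_vertex E v) D)"

end

theory Submission
  imports Defs
begin

lemma cn_sub: "simple_graph V E \<Longrightarrow> v \<in> V \<Longrightarrow> closed_nbhd V E v \<subseteq> V"
  by (auto simp: closed_nbhd_def nbhd_def)

lemma cn_fin: "simple_graph V E \<Longrightarrow> finite (closed_nbhd V E v)"
  by (auto simp: closed_nbhd_def nbhd_def simple_graph_def)

lemma cn_card: "simple_graph V E \<Longrightarrow> card (closed_nbhd V E v) = degree V E v + 1"
proof -
  assume sg: "simple_graph V E"
  have "v \<notin> nbhd V E v" using sg by (auto simp: nbhd_def simple_graph_def)
  moreover have "finite (nbhd V E v)" using sg by (auto simp: nbhd_def simple_graph_def)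
  ultimately show ?thesis by (simp add: closed_nbhd_def degree_def)
qed

lemma cn_sym: "simple_graph V E \<Longrightarrow> u \<in> V \<Longrightarrow> v \<in> V \<Longrightarrow> (u \<in> closed_nbhd V E v) = (v \<in> closed_nbhd V E u)"
  by (auto simp: closed_nbhd_def nbhd_def simple_graph_def)

lemma double_count:
  assumes sg: "simple_graph V E" and DV: "D \<subseteq> V"
  shows "(\<Sum>d\<in>D. card (closed_nbhd V E d)) = (\<Sum>v\<in>V. card (closed_nbhd V E v \<inter> D))"
proof -
  have fin: "finite V" using sg by (simp add: simple_graph_def)
  have finD: "finite D" using fin DV finite_subset by blast
  have 1: "card (closed_nbhd V E d) = (\<Sum>v\<in>V. if v \<in> closed_nbhd V E d then 1 else 0)" if "d \<in> D" for d
  proof -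
    have "closed_nbhd V E d = V \<inter> closed_nbhd V E d" using cn_sub[OF sg] that DV by blast
    then have "card (closed_nbhd V E d) = card (V \<inter> closed_nbhd V E d)" by simp
    also have "\<dots> = (\<Sum>v\<in>V \<inter> closed_nbhd V E d. 1)" by simp
    also have "\<dots> = (\<Sum>v\<in>V. if v \<in> closed_nbhd V E d then 1 else 0)"
      using sum.inter_restrict[OF fin, of "\<lambda>_. 1::nat"] by simp
    finally show ?thesis .
  qed
  have 2: "card (closed_nbhd V E v \<inter> D) = (\<Sum>d\<in>D. if v \<in> closed_nbhd V E d then 1 else 0)" if "v \<in> V" for v
  proof -
    have "card (closed_nbhd V E v \<inter> D) = card (D \<inter> closed_nbhd V E v)" by (simp add: Int_commute)
    also have "\<dots> = (\<Sum>d\<in>D \<inter> closed_nbhd V E v. 1)" by simp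
    also have "\<dots> = (\<Sum>d\<in>D. if d \<in> closed_nbhd V E v then 1 else 0)"
      using sum.inter_restrict[OF finD, of "\<lambda>_. 1::nat"] by simp
    also have "\<dots> = (\<Sum>d\<in>D. if v \<in> closed_nbhd V E d then 1 else 0)"
      using cn_sym[OF sg] that DV by (intro sum.cong) auto
    finally show ?thesis .
  qed
  have "(\<Sum>d\<in>D. card (closed_nbhd V E d)) = (\<Sum>d\<in>D. \<Sum>v\<in>V. if v \<in> closed_nbhd V E d then 1 else 0)"
    using 1 by (rule sum.cong[OF refl])
  also have "\<dots> = (\<Sum>v\<in>V. \<Sum>d\<in>D. if v \<in> closed_nbhd V E d then 1 else 0)"
    by (rule sum.swap)
  also have "\<dots> = (\<Sum>v\<in>V. card (closed_nbhd V E v \<inter> D))"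
    using 2 by (intro sum.cong) auto
  finally show ?thesis .
qed

lemma cnt_ge1:
  assumes sg: "simple_graph V E" and dom: "dominating V E D" and v: "v \<in> V"
  shows "1 \<le> card (closed_nbhd V E v \<inter> D)"
proof -
  have "closed_nbhd V E v \<inter> D \<noteq> {}"
  proof (cases "v \<in> D")
    case True then show ?thesis by (auto simp: closed_nbhd_def)
  next
    case False
    then obtain u where "u \<in> D" "E v u" using dom v by (auto simp: dominating_def)
    moreover have "u \<in> V" using sg \<open>E v u\<close> by (auto simp: simple_graph_def)
    ultimately show ?thesis by (auto simp: closed_nbhd_def nbhd_def)
  qed
  then show ?thesis using cn_fin[OF sg] by (simp add: Suc_le_eq card_gt_0_iff)
qed

lemma cn_del: "y \<in> V \<Longrightarrow> v \<in> V - {y} \<Longrightarrow> closed_nbhd (V - {y}) (del_vertex E y) v = closed_nbhd V E v - {y}"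
  by (auto simp: closed_nbhd_def nbhd_def del_vertex_def)

lemma eds_del_iff:
  assumes "y \<in> V" "y \<notin> D" "D \<subseteq> V"
  shows "efficient_dominating (V - {y}) (del_vertex E y) D \<longleftrightarrow> (\<forall>v\<in>V - {y}. card (closed_nbhd V E v \<inter> D) = 1)"
proof -
  have "\<And>v. v \<in> V - {y} \<Longrightarrow> closed_nbhd (V - {y}) (del_vertex E y) v \<inter> D = closed_nbhd V E v \<inter> D"
    using cn_del[OF assms(1)] assms(2) by blast
  then show ?thesis using assms unfolding efficient_dominating_def by auto
qed

lemma sum_eq_ones:
  fixes c :: "'b \<Rightarrow> nat"
  assumes fin: "finite A" and ge: "\<forall>v\<in>A. 1 \<le> c v" and s: "sum c A \<le> card A" and v: "v \<in> A"
  shows "c v = 1"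
proof (rule ccontr)
  assume "c v \<noteq> 1"
  then have "1 < c v" using ge v by force
  then have "(\<Sum>v\<in>A. 1::nat) < sum c A" using fin ge v by (intro sum_strict_mono_ex1) auto
  then show False using s by simp
qed

lemma hypo_key:
  assumes sg: "simple_graph V E" and noeds: "\<And>D. \<not> efficient_dominating V E D"
    and dom: "dominating V E D"
  shows "card V + 1 \<le> (\<Sum>v\<in>V. card (closed_nbhd V E v \<inter> D))"
proof -
  have fin: "finite V" using sg by (simp add: simple_graph_def)
  have ge: "\<forall>v\<in>V. 1 \<le> card (closed_nbhd V E v \<inter> D)" using cnt_ge1[OF sg dom] by blast
  show ?thesis
  proof (rule ccontr)
    assume "\<not> ?thesis"
    then have "(\<Sum>v\<in>V. card (closed_nbhd V E v \<inter> D)) \<le> card V" by simp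
    then have "\<forall>v\<in>V. card (closed_nbhd V E v \<inter> D) = 1" using sum_eq_ones[OF fin ge] by blast
    then have "efficient_dominating V E D" using dom by (simp add: efficient_dominating_def dominating_def)
    then show False using noeds by blast
  qed
qed


theorem corollary3p10:
  fixes V :: "'a set" and E :: "'a \<Rightarrow> 'a \<Rightarrow> bool"
  assumes "simple_graph V E"
    and "hypo_efficient_domination V E"
  shows "int (card V) \<le> int (domination_number V E) * (int (max_degree V E) + 1) - 1
    \<and> (int (card V) = int (domination_number V E) * (int (max_degree V E) + 1) - 1 \<longrightarrow>
         (\<forall>D. gamma_set V E D \<longrightarrow>
            (\<exists>!y. y \<in> V - D \<and> efficient_dominating (V - {y}) (del_vertex E y) D)
            \<and> (\<forall>y. y \<in> V - D \<and> efficient_dominating (V - {y}) (del_vertex E y) D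
                   \<longrightarrow> card (nbhd V E y \<inter> D) = 2))
       \<and> (\<forall>v \<in> V. (\<exists>D. gamma_set V E D \<and> v \<in> D) \<longrightarrow> degree V E v = max_degree V E)
       \<and> ((\<forall>v \<in> V. \<exists>D. gamma_set V E D \<and> v \<in> D) \<longrightarrow> regular V E))
    \<and> ((\<exists>D y. gamma_set V E D \<and> y \<in> V - D
           \<and> efficient_dominating (V - {y}) (del_vertex E y) D
           \<and> card (nbhd V E y \<inter> D) = 2
           \<and> (\<forall>v \<in> D. degree V E v = max_degree V E))
       \<longrightarrow> int (card V) = int (domination_number V E) * (int (max_degree V E) + 1) - 1)"
proof -
  have sg: "simple_graph V E" using assms(1) .
  have fin: "finite V" using sg by (simp add: simple_graph_def)
  have noeds: "\<And>D. \<not> efficient_dominating V E D" using assms(2) by (auto simp: hypo_efficient_domination_def)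
  have Vne: "V \<noteq> {}"
  proof
    assume "V = {}"
    then have "efficient_dominating V E {}" by (simp add: efficient_dominating_def)
    then show False using noeds by blast
  qed
  define \<Delta> where "\<Delta> = max_degree V E"
  define \<gamma> where "\<gamma> = domination_number V E"
  have degle: "degree V E v \<le> \<Delta>" if "v \<in> V" for v
    using that fin Vne by (simp add: \<Delta>_def max_degree_def)
  have gex: "\<exists>D. gamma_set V E D"
  proof -
    have "dominating V E V" by (simp add: dominating_def)
    then have "\<exists>k. \<exists>D. dominating V E D \<and> card D = k" by blast
    then have "\<exists>D. dominating V E D \<and> card D = (LEAST k. \<exists>D. dominating V E D \<and> card D = k)"
      by (rule LeastI_ex)
    then show ?thesis by (simp add: gamma_set_def domination_number_def)
  qed
  define S where "S D = (\<Sum>v\<in>V. card (closed_nbhd V E v \<inter> D))" for D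
  have DV: "D \<subseteq> V" if "gamma_set V E D" for D
    using that by (simp add: gamma_set_def dominating_def)
  have S_eq: "S D = (\<Sum>d\<in>D. degree V E d + 1)" if "gamma_set V E D" for D
    using double_count[OF sg DV[OF that]] cn_card[OF sg] by (simp add: S_def)
  have S_ge: "card V + 1 \<le> S D" if "gamma_set V E D" for D
    using hypo_key[OF sg noeds] that by (simp add: S_def gamma_set_def)
  have S_le: "(\<Sum>d\<in>D. degree V E d + 1) \<le> \<gamma> * (\<Delta> + 1)" if "gamma_set V E D" for D
  proof -
    have "(\<Sum>d\<in>D. degree V E d + 1) \<le> (\<Sum>d\<in>D. \<Delta> + 1)"
      using degle DV[OF that] by (intro sum_mono) auto
    also have "\<dots> = \<gamma> * (\<Delta> + 1)" using that by (simp add: gamma_set_def \<gamma>_def)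
    finally show ?thesis .
  qed
  obtain D0 where D0: "gamma_set V E D0" using gex by blast
  have P1: "card V + 1 \<le> \<gamma> * (\<Delta> + 1)" using S_ge[OF D0] S_eq[OF D0] S_le[OF D0] by simp
  have cnt1: "card (closed_nbhd V E v \<inter> D) = 1"
    if "y \<in> V" "y \<notin> D" "D \<subseteq> V" "efficient_dominating (V - {y}) (del_vertex E y) D" "v \<in> V - {y}" for y v D
    using eds_del_iff[OF that(1-3)] that(4,5) by blast
  have Ssplit: "S D = card (closed_nbhd V E y \<inter> D) + (card V - 1)"
    if "y \<in> V" "y \<notin> D" "D \<subseteq> V" "efficient_dominating (V - {y}) (del_vertex E y) D" for y D
  proof -
    have "S D = card (closed_nbhd V E y \<inter> D) + (\<Sum>v\<in>V - {y}. card (closed_nbhd V E v \<inter> D))"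
      unfolding S_def using fin that(1) by (simp add: sum.remove)
    also have "(\<Sum>v\<in>V - {y}. card (closed_nbhd V E v \<inter> D)) = (\<Sum>v\<in>V - {y}. 1)"
      using cnt1[OF that] by (intro sum.cong) auto
    also have "\<dots> = card V - 1" using fin that(1) by simp
    finally show ?thesis .
  qed
  have nb_eq: "card (nbhd V E y \<inter> D) = card (closed_nbhd V E y \<inter> D)" if "y \<notin> D" for y D
  proof -
    have "nbhd V E y \<inter> D = closed_nbhd V E y \<inter> D" using that by (auto simp: closed_nbhd_def)
    then show ?thesis by simp
  qed
  have PI: "(\<forall>D. gamma_set V E D \<longrightarrow>
            (\<exists>!y. y \<in> V - D \<and> efficient_dominating (V - {y}) (del_vertex E y) D)
            \<and> (\<forall>y. y \<in> V - D \<and> efficient_dominating (V - {y}) (del_vertex E y) D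
                   \<longrightarrow> card (nbhd V E y \<inter> D) = 2))
       \<and> (\<forall>v \<in> V. (\<exists>D. gamma_set V E D \<and> v \<in> D) \<longrightarrow> degree V E v = max_degree V E)
       \<and> ((\<forall>v \<in> V. \<exists>D. gamma_set V E D \<and> v \<in> D) \<longrightarrow> regular V E)"
    if eq: "card V + 1 = \<gamma> * (\<Delta> + 1)"
  proof -
    have SD: "S D = card V + 1" if "gamma_set V E D" for D
      using S_ge[OF that] S_eq[OF that] S_le[OF that] eq by simp
    have degD: "degree V E d = \<Delta>" if "gamma_set V E D" "d \<in> D" for D d
    proof (rule ccontr)
      assume "degree V E d \<noteq> \<Delta>"
      then have "degree V E d < \<Delta>" using degle DV[OF that(1)] that(2) by force
      have finD: "finite D" using DV[OF that(1)] fin finite_subset by blast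
      have "(\<Sum>d\<in>D. degree V E d + 1) < (\<Sum>d\<in>D. \<Delta> + 1)"
        using degle DV[OF that(1)] that(2) finD \<open>degree V E d < \<Delta>\<close>
        by (intro sum_strict_mono_ex1) auto
      also have "\<dots> = \<gamma> * (\<Delta> + 1)" using that by (simp add: gamma_set_def \<gamma>_def)
      finally show False using SD[OF that(1)] S_eq[OF that(1)] eq by simp
    qed
    have two: "card (closed_nbhd V E y \<inter> D) = 2"
      if "gamma_set V E D" "y \<in> V - D" "efficient_dominating (V - {y}) (del_vertex E y) D" for D y
    proof -
      have "S D = card (closed_nbhd V E y \<inter> D) + (card V - 1)"
        using Ssplit[of y D] that DV[OF that(1)] by blast
      moreover have "1 \<le> card V" using Vne fin by (simp add: Suc_le_eq card_gt_0_iff)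
      ultimately show ?thesis using SD[OF that(1)] by linarith
    qed
    have A: "(\<exists>!y. y \<in> V - D \<and> efficient_dominating (V - {y}) (del_vertex E y) D)
            \<and> (\<forall>y. y \<in> V - D \<and> efficient_dominating (V - {y}) (del_vertex E y) D
                   \<longrightarrow> card (nbhd V E y \<inter> D) = 2)" if gs: "gamma_set V E D" for D
    proof -
      have dom: "dominating V E D" using gs by (simp add: gamma_set_def)
      have ge: "\<forall>v\<in>V. 1 \<le> card (closed_nbhd V E v \<inter> D)" using cnt_ge1[OF sg dom] by blast
      obtain y where y: "y \<in> V" "card (closed_nbhd V E y \<inter> D) \<noteq> 1"
      proof -
        have "\<not> (\<forall>v\<in>V. card (closed_nbhd V E v \<inter> D) = 1)"
          using noeds dom by (auto simp: efficient_dominating_def dominating_def)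
        then show ?thesis using that by blast
      qed
      have fin1: "finite (V - {y})" using fin by simp
      have ge1: "\<forall>v\<in>V - {y}. 1 \<le> card (closed_nbhd V E v \<inter> D)" using ge by blast
      have split: "S D = card (closed_nbhd V E y \<inter> D) + (\<Sum>v\<in>V - {y}. card (closed_nbhd V E v \<inter> D))"
        unfolding S_def using fin y(1) by (simp add: sum.remove)
      have lb: "card (V - {y}) \<le> (\<Sum>v\<in>V - {y}. card (closed_nbhd V E v \<inter> D))"
        using sum_mono[of "V - {y}" "\<lambda>_. 1::nat" "\<lambda>v. card (closed_nbhd V E v \<inter> D)"] ge1 by simp
      have cV: "card (V - {y}) = card V - 1" using y(1) fin by simp
      have cVpos: "1 \<le> card V" using Vne fin by (simp add: Suc_le_eq card_gt_0_iff)
      have cy: "card (closed_nbhd V E y \<inter> D) = 2"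
      proof -
        have "1 \<le> card (closed_nbhd V E y \<inter> D)" using ge y(1) by blast
        then show ?thesis using split SD[OF gs] lb cV cVpos y(2) by linarith
      qed
      have rest: "(\<Sum>v\<in>V - {y}. card (closed_nbhd V E v \<inter> D)) \<le> card (V - {y})"
        using split SD[OF gs] cV cVpos cy by simp
      have others: "card (closed_nbhd V E v \<inter> D) = 1" if "v \<in> V - {y}" for v
        using sum_eq_ones[OF fin1 ge1 rest that] .
      have yD: "y \<notin> D"
      proof
        assume "y \<in> D"
        then have "y \<in> closed_nbhd V E y \<inter> D" by (simp add: closed_nbhd_def)
        moreover have "closed_nbhd V E y \<inter> D \<noteq> {y}" using cy by auto
        ultimately obtain d where d: "d \<in> closed_nbhd V E y \<inter> D" "d \<noteq> y" by blast
        then have dV: "d \<in> V" and Eyd: "E y d" by (auto simp: closed_nbhd_def nbhd_def)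
        have "{d, y} \<subseteq> closed_nbhd V E d \<inter> D"
          using d \<open>y \<in> D\<close> Eyd sg y(1) by (auto simp: closed_nbhd_def nbhd_def simple_graph_def)
        then have "2 \<le> card (closed_nbhd V E d \<inter> D)"
          using card_mono[OF _ \<open>{d, y} \<subseteq> _\<close>] cn_fin[OF sg] d(2) by fastforce
        then show False using others[of d] dV d(2) by simp
      qed
      have eds: "efficient_dominating (V - {y}) (del_vertex E y) D"
        using eds_del_iff[OF y(1) yD DV[OF gs]] others by blast
      have uniq: "y' = y" if "y' \<in> V - D" "efficient_dominating (V - {y'}) (del_vertex E y') D" for y'
      proof (rule ccontr)
        assume "y' \<noteq> y"
        then have "card (closed_nbhd V E y \<inter> D) = 1"
          using cnt1[of y' D y] that DV[OF gs] y(1) by blast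
        then show False using cy by simp
      qed
      show ?thesis
      proof
        show "\<exists>!y. y \<in> V - D \<and> efficient_dominating (V - {y}) (del_vertex E y) D"
        proof (rule ex1I)
          show "y \<in> V - D \<and> efficient_dominating (V - {y}) (del_vertex E y) D"
            using y(1) yD eds by simp
        next
          fix y' assume "y' \<in> V - D \<and> efficient_dominating (V - {y'}) (del_vertex E y') D"
          then show "y' = y" using uniq by simp
        qed
        show "\<forall>y. y \<in> V - D \<and> efficient_dominating (V - {y}) (del_vertex E y) D
                   \<longrightarrow> card (nbhd V E y \<inter> D) = 2"
        proof (intro allI impI)
          fix y' assume h: "y' \<in> V - D \<and> efficient_dominating (V - {y'}) (del_vertex E y') D"
          then have "card (closed_nbhd V E y' \<inter> D) = 2" using two[OF gs, of y'] by simp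
          moreover have "y' \<notin> D" using h by simp
          ultimately show "card (nbhd V E y' \<inter> D) = 2" using nb_eq[of y' D] by simp
        qed
      qed
    qed
    have A': "\<forall>D. gamma_set V E D \<longrightarrow>
            (\<exists>!y. y \<in> V - D \<and> efficient_dominating (V - {y}) (del_vertex E y) D)
            \<and> (\<forall>y. y \<in> V - D \<and> efficient_dominating (V - {y}) (del_vertex E y) D
                   \<longrightarrow> card (nbhd V E y \<inter> D) = 2)"
      by (intro allI impI) (erule A)
    have B: "\<forall>v \<in> V. (\<exists>D. gamma_set V E D \<and> v \<in> D) \<longrightarrow> degree V E v = max_degree V E"
    proof (intro ballI impI)
      fix v assume "v \<in> V" "\<exists>D. gamma_set V E D \<and> v \<in> D"
      then obtain D where "gamma_set V E D" "v \<in> D" by blast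
      then show "degree V E v = max_degree V E" using degD[of D v] by (simp add: \<Delta>_def)
    qed
    have C: "(\<forall>v \<in> V. \<exists>D. gamma_set V E D \<and> v \<in> D) \<longrightarrow> regular V E"
    proof
      assume "\<forall>v \<in> V. \<exists>D. gamma_set V E D \<and> v \<in> D"
      then have "\<forall>v\<in>V. degree V E v = max_degree V E" using B by blast
      then show "regular V E" unfolding regular_def by simp
    qed
    show ?thesis by (rule conjI[OF A' conjI[OF B C]])
  qed
  have PII: "card V + 1 = \<gamma> * (\<Delta> + 1)"
    if "gamma_set V E D" "y \<in> V - D" "efficient_dominating (V - {y}) (del_vertex E y) D"
       "card (nbhd V E y \<inter> D) = 2" "\<forall>v \<in> D. degree V E v = max_degree V E" for D y
  proof -
    have "S D = 2 + (card V - 1)"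
      using Ssplit[of y D] that DV[OF that(1)] nb_eq[of y D] by simp
    moreover have "1 \<le> card V" using Vne fin by (simp add: Suc_le_eq card_gt_0_iff)
    moreover have "S D = \<gamma> * (\<Delta> + 1)"
      using S_eq[OF that(1)] that(1,5) by (simp add: \<Delta>_def gamma_set_def \<gamma>_def)
    ultimately show ?thesis by simp
  qed
  have eqiff: "int (card V) = int \<gamma> * (int \<Delta> + 1) - 1 \<longleftrightarrow> card V + 1 = \<gamma> * (\<Delta> + 1)"
  proof -
    have h: "int (\<gamma> * (\<Delta> + 1)) = int \<gamma> * (int \<Delta> + 1)" by (simp add: algebra_simps)
    have "(card V + 1 = \<gamma> * (\<Delta> + 1)) \<longleftrightarrow> int (card V + 1) = int (\<gamma> * (\<Delta> + 1))"
      by (simp only: of_nat_eq_iff)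
    moreover have e: "int (card V + 1) = int (card V) + 1" by simp
    ultimately have q: "(card V + 1 = \<gamma> * (\<Delta> + 1)) \<longleftrightarrow> int (card V) + 1 = int \<gamma> * (int \<Delta> + 1)"
      using h e by (simp only:)
    show ?thesis
    proof
      assume "int (card V) = int \<gamma> * (int \<Delta> + 1) - 1"
      then have "int (card V) + 1 = int \<gamma> * (int \<Delta> + 1)" by linarith
      then show "card V + 1 = \<gamma> * (\<Delta> + 1)" using q by blast
    next
      assume "card V + 1 = \<gamma> * (\<Delta> + 1)"
      then have "int (card V) + 1 = int \<gamma> * (int \<Delta> + 1)" using q by blast
      then show "int (card V) = int \<gamma> * (int \<Delta> + 1) - 1" by linarith
    qed
  qed
  have LE: "int (card V) \<le> int \<gamma> * (int \<Delta> + 1) - 1"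
  proof -
    have "int (card V + 1) \<le> int (\<gamma> * (\<Delta> + 1))" using P1 by (simp only: of_nat_le_iff)
    then show ?thesis by (simp add: algebra_simps)
  qed
  note PI' = PI[unfolded \<Delta>_def[symmetric]]
  note PII' = PII[unfolded \<Delta>_def[symmetric]]
  show ?thesis
    unfolding \<gamma>_def[symmetric] \<Delta>_def[symmetric] eqiff
    apply (rule conjI[OF LE])
    apply (rule conjI)
     apply (rule impI)
     apply (erule PI')
    apply (rule impI)
    apply (elim exE conjE)
    apply (rule PII')
        apply assumption+
    done
qed

end
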